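(* Let $(X,\mathcal{U})$ be a uniform space with $\mathcal{F}$, $\mathcal{V}$, $G$ as in the context, and let $T:X\to X$ be a Ćirić-$G$-contraction. Then for every $x\in X_T$ the sequence $\{T^nx\}$ is Cauchy in $X$.
   Context: A uniform space $(X,\mathcal{U})$ is a nonempty set $X$ with a uniformity $\mathcal{U}$ on $X$. For $U,V\subseteq X\times X$, $\Delta(X)=\{(x,x):x\in X\}$ and $U\circ V=\{(x,y):\exists z\in X,\ (x,z)\in V,\ (z,y)\in U\}$. A sequence $\{x_n\}$ is Cauchy if for every $U\in\mathcal{U}$ there is $N$ with $(x_m,x_n)\in U$ for $m,n\ge N$. $\mathcal{F}$ is a nonempty collection of (uniformly continuous) pseudometrics on $X$ generating $\mathcal{U}$, and $\mathcal{V}$ is the family of all sets $V=\bigcap_{i=1}^m\{(x,y)\in X\times X:\rho_i(x,y)<r_i\}$ with $m\ge1$, $\rho_i\in\mathcal{F}$, $r_i>0$; $\mathcal{V}$ is a base for $\mathcal{U}$. For such $V$ and $\beta>0$, $\beta V=\bigcap_{i=1}^m\{(x,y):\rho_i(x,y)<\beta r_i\}$. $G$ is a directed graph without parallel edges with vertex set $X$ and edge set $E(G)\subseteq X\times X$ containing $\Delta(X)$. For $T:X\to X$, $X_T=\{x\in X:(x,Tx)\in E(G)\}$. A map $T:X\to X$ is a Ćirić-$G$-contraction if (C1) $(x,y)\in E(G)$ implies $(Tx,Ty)\in E(G)$; and (C2) there are positive-valued functions $a_1,a_2,a_3,a_4$ on $X\times X$ with $\sup\{a_1(x,y)+a_2(x,y)+a_3(x,y)+2a_4(x,y):x,y\in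 X\}=\alpha<1$ such that for all $x,y\in X$ and all $V_1,\dots,V_5\in\mathcal{V}$: if $(x,y)\in E(G)\cap V_1$, $(x,Tx)\in V_2$, $(y,Ty)\in V_3$, $(x,Ty)\in V_4$, $(y,Tx)\in V_5$, then $(Tx,Ty)\in a_1(x,y)V_1\circ a_2(x,y)V_2\circ a_3(x,y)V_3\circ a_4(x,y)V_4\circ a_4(x,y)V_5$. *)

theory Defs
  imports Complex_Main
begin

definition pseudometric :: "('a \<Rightarrow> 'a \<Rightarrow> real) \<Rightarrow> bool" where
  "pseudometric \<rho> \<longleftrightarrow> (\<forall>x. \<rho> x x = 0) \<and> (\<forall>x y. 0 \<le> \<rho> x y) \<and>
     (\<forall>x y. \<rho> x y = \<rho> y x) \<and> (\<forall>x y z. \<rho> x z \<le> \<rho> x y + \<rho> y z)"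

text \<open>A basic entourage is represented by a nonempty finite list of pairs (rho_i, r_i)
  with rho_i in F and r_i > 0.\<close>
definition basic_rep :: "('a \<Rightarrow> 'a \<Rightarrow> real) set \<Rightarrow> (('a \<Rightarrow> 'a \<Rightarrow> real) \<times> real) list \<Rightarrow> bool" where
  "basic_rep F rs \<longleftrightarrow> rs \<noteq> [] \<and> (\<forall>(\<rho>, r) \<in> set rs. \<rho> \<in> F \<and> 0 < r)"

text \<open>beta V for V represented by rs; ent rs = 1 V.\<close>
definition scaled_ent :: "real \<Rightarrow> (('a \<Rightarrow> 'a \<Rightarrow> real) \<times> real) list \<Rightarrow> ('a \<times> 'a) set" where
  "scaled_ent \<beta> rs = {(x, y). \<forall>(\<rho>, r) \<in> set rs. \<rho> x y < \<beta> * r}"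

definition ent :: "(('a \<Rightarrow> 'a \<Rightarrow> real) \<times> real) list \<Rightarrow> ('a \<times> 'a) set" where
  "ent rs = scaled_ent 1 rs"

definition basic_ents :: "('a \<Rightarrow> 'a \<Rightarrow> real) set \<Rightarrow> ('a \<times> 'a) set set" where
  "basic_ents F = {ent rs | rs. basic_rep F rs}"

definition unif :: "('a \<Rightarrow> 'a \<Rightarrow> real) set \<Rightarrow> ('a \<times> 'a) set set" where
  "unif F = {U. \<exists>V \<in> basic_ents F. V \<subseteq> U}"

definition ucomp :: "('a \<times> 'a) set \<Rightarrow> ('a \<times> 'a) set \<Rightarrow> ('a \<times> 'a) set" (infixr "\<circ>\<^sub>u" 75) where
  "U \<circ>\<^sub>u V = {(x, y). \<exists>z. (x, z) \<in> V \<and> (z, y) \<in> U}"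

definition unif_cauchy :: "('a \<Rightarrow> 'a \<Rightarrow> real) set \<Rightarrow> (nat \<Rightarrow> 'a) \<Rightarrow> bool" where
  "unif_cauchy F s \<longleftrightarrow> (\<forall>U \<in> unif F. \<exists>N. \<forall>m n. N \<le> m \<longrightarrow> N \<le> n \<longrightarrow> (s m, s n) \<in> U)"

definition X_T :: "('a \<times> 'a) set \<Rightarrow> ('a \<Rightarrow> 'a) \<Rightarrow> 'a set" where
  "X_T E T = {x. (x, T x) \<in> E}"

definition ciric_G_contraction ::
  "('a \<Rightarrow> 'a \<Rightarrow> real) set \<Rightarrow> ('a \<times> 'a) set \<Rightarrow> ('a \<Rightarrow> 'a) \<Rightarrow> bool" where
  "ciric_G_contraction F E T \<longleftrightarrow>
     (\<forall>x y. (x, y) \<in> E \<longrightarrow> (T x, T y) \<in> E) \<and>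
     (\<exists>a1 a2 a3 a4 :: 'a \<Rightarrow> 'a \<Rightarrow> real.
        (\<forall>x y. 0 < a1 x y \<and> 0 < a2 x y \<and> 0 < a3 x y \<and> 0 < a4 x y) \<and>
        bdd_above {a1 x y + a2 x y + a3 x y + 2 * a4 x y | x y. True} \<and>
        Sup {a1 x y + a2 x y + a3 x y + 2 * a4 x y | x y. True} < 1 \<and>
        (\<forall>x y V1 V2 V3 V4 V5.
           basic_rep F V1 \<longrightarrow> basic_rep F V2 \<longrightarrow> basic_rep F V3 \<longrightarrow>
           basic_rep F V4 \<longrightarrow> basic_rep F V5 \<longrightarrow>
           (x, y) \<in> E \<longrightarrow> (x, y) \<in> ent V1 \<longrightarrow> (x, T x) \<in> ent V2 \<longrightarrow>
           (y, T y) \<in> ent V3 \<longrightarrow> (x, T y) \<in> ent V4 \<longrightarrow> (y, T x) \<in> ent V5 \<longrightarrow>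
           (T x, T y) \<in> scaled_ent (a1 x y) V1 \<circ>\<^sub>u scaled_ent (a2 x y) V2 \<circ>\<^sub>u
                        scaled_ent (a3 x y) V3 \<circ>\<^sub>u scaled_ent (a4 x y) V4 \<circ>\<^sub>u
                        scaled_ent (a4 x y) V5))"

end

theory Submission
  imports Defs
begin

lemma single_rep: "basic_rep F [(\<rho>, r)] \<longleftrightarrow> \<rho> \<in> F \<and> 0 < r"
  by (simp add: basic_rep_def)

lemma single_scaled: "(u, v) \<in> scaled_ent b [(\<rho>, r)] \<longleftrightarrow> \<rho> u v < b * r"
  by (simp add: scaled_ent_def)

lemma single_ent: "(u, v) \<in> ent [(\<rho>, r)] \<longleftrightarrow> \<rho> u v < r"
  by (simp add: ent_def scaled_ent_def)

lemma key_ineq: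
  fixes \<rho> :: "'a \<Rightarrow> 'a \<Rightarrow> real"
  assumes pm: "pseudometric \<rho>" and rF: "\<rho> \<in> F"
    and pos: "0 < b1" "0 < b2" "0 < b3" "0 < b4"
    and H: "\<And>V1 V2 V3 V4 V5.
           basic_rep F V1 \<Longrightarrow> basic_rep F V2 \<Longrightarrow> basic_rep F V3 \<Longrightarrow>
           basic_rep F V4 \<Longrightarrow> basic_rep F V5 \<Longrightarrow>
           (x, y) \<in> ent V1 \<Longrightarrow> (x, Tx) \<in> ent V2 \<Longrightarrow>
           (y, Ty) \<in> ent V3 \<Longrightarrow> (x, Ty) \<in> ent V4 \<Longrightarrow> (y, Tx) \<in> ent V5 \<Longrightarrow>
           (Tx, Ty) \<in> scaled_ent b1 V1 \<circ>\<^sub>u scaled_ent b2 V2 \<circ>\<^sub>u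
                        scaled_ent b3 V3 \<circ>\<^sub>u scaled_ent b4 V4 \<circ>\<^sub>u
                        scaled_ent b4 V5"
  shows "\<rho> Tx Ty \<le> b1 * \<rho> x y + b2 * \<rho> x Tx + b3 * \<rho> y Ty + b4 * (\<rho> x Ty + \<rho> y Tx)"
proof (rule field_le_epsilon)
  fix e :: real assume e: "0 < e"
  define S where "S = b1 + b2 + b3 + 2 * b4"
  have S: "0 < S" using pos by (simp add: S_def)
  define \<delta> where "\<delta> = e / S"
  have d: "0 < \<delta>" using e S by (simp add: \<delta>_def)
  have nn: "\<And>u v. 0 \<le> \<rho> u v" using pm by (simp add: pseudometric_def)
  have tri: "\<And>u v w. \<rho> u v \<le> \<rho> u w + \<rho> w v" using pm unfolding pseudometric_def by blast
  let ?r1 = "\<rho> x y + \<delta>" and ?r2 = "\<rho> x Tx + \<delta>" and ?r3 = "\<rho> y Ty + \<delta>"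
    and ?r4 = "\<rho> x Ty + \<delta>" and ?r5 = "\<rho> y Tx + \<delta>"
  have mem: "(Tx, Ty) \<in> scaled_ent b1 [(\<rho>, ?r1)] \<circ>\<^sub>u scaled_ent b2 [(\<rho>, ?r2)] \<circ>\<^sub>u
                        scaled_ent b3 [(\<rho>, ?r3)] \<circ>\<^sub>u scaled_ent b4 [(\<rho>, ?r4)] \<circ>\<^sub>u
                        scaled_ent b4 [(\<rho>, ?r5)]"
    apply (rule H)
    using rF d nn by (simp_all add: single_rep single_ent add_nonneg_pos)
  then obtain z1 z2 z3 z4 where
    h1: "\<rho> z1 Ty < b1 * ?r1" and h2: "\<rho> z2 z1 < b2 * ?r2" and h3: "\<rho> z3 z2 < b3 * ?r3"
    and h4: "\<rho> z4 z3 < b4 * ?r4" and h5: "\<rho> Tx z4 < b4 * ?r5"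
    by (auto simp: ucomp_def single_scaled)
  have "\<rho> Tx Ty \<le> \<rho> Tx z4 + \<rho> z4 z3 + \<rho> z3 z2 + \<rho> z2 z1 + \<rho> z1 Ty"
    using tri[of Tx Ty z4] tri[of z4 Ty z3] tri[of z3 Ty z2] tri[of z2 Ty z1] by linarith
  also have "\<dots> \<le> b1 * ?r1 + b2 * ?r2 + b3 * ?r3 + b4 * ?r4 + b4 * ?r5"
    using h1 h2 h3 h4 h5 by linarith
  also have "\<dots> = b1 * \<rho> x y + b2 * \<rho> x Tx + b3 * \<rho> y Ty + b4 * (\<rho> x Ty + \<rho> y Tx) + \<delta> * S"
    by (simp add: S_def algebra_simps)
  also have "\<delta> * S = e" using S by (simp add: \<delta>_def)
  finally show "\<rho> Tx Ty \<le> b1 * \<rho> x y + b2 * \<rho> x Tx + b3 * \<rho> y Ty + b4 * (\<rho> x Ty + \<rho> y Tx) + e" .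
qed

lemma ratio_step:
  fixes b1 b2 b3 b4 \<alpha> d d' c :: real
  assumes pos: "0 < b1" "0 < b2" "0 < b3" "0 < b4"
    and s: "b1 + b2 + b3 + 2 * b4 \<le> \<alpha>" and a1: "\<alpha> < 1"
    and dn: "0 \<le> d" "0 \<le> d'"
    and ineq: "d' \<le> b1 * d + b2 * d + b3 * d' + b4 * c"
    and c: "c \<le> d + d'"
  shows "d' \<le> \<alpha> * d"
proof -
  have "d' \<le> b1 * d + b2 * d + b3 * d' + b4 * (d + d')"
    using ineq c pos mult_left_mono[OF c, of b4] by linarith
  hence A: "(1 - b3 - b4) * d' \<le> (b1 + b2 + b4) * d" by (simp add: algebra_simps)
  have "(b1 + b2 + b4) * d \<le> (\<alpha> - b3 - b4) * d"
    by (intro mult_right_mono) (use dn s pos in auto)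
  also have "\<dots> \<le> (\<alpha> * (1 - b3 - b4)) * d"
  proof (rule mult_right_mono)
    have "\<alpha> * (b3 + b4) \<le> b3 + b4" using a1 pos s by (intro mult_left_le_one_le) auto
    thus "\<alpha> - b3 - b4 \<le> \<alpha> * (1 - b3 - b4)" by (simp add: algebra_simps)
  qed (use dn s pos in auto)
  finally have "(1 - b3 - b4) * d' \<le> (1 - b3 - b4) * (\<alpha> * d)" using A by (simp add: algebra_simps)
  moreover have "0 < 1 - b3 - b4" using s a1 pos by linarith
  ultimately show ?thesis by simp
qed

theorem lemma3:
  fixes F :: "('a \<Rightarrow> 'a \<Rightarrow> real) set" and E :: "('a \<times> 'a) set" and T :: "'a \<Rightarrow> 'a" and x :: 'a
  assumes "F \<noteq> {}"
    and "\<forall>\<rho> \<in> F. pseudometric \<rho>"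
    and "\<forall>z. (z, z) \<in> E"
    and "ciric_G_contraction F E T"
    and "x \<in> X_T E T"
  shows "unif_cauchy F (\<lambda>n. (T ^^ n) x)"
proof -
  define s where "s n = (T ^^ n) x" for n
  have sS: "s (Suc n) = T (s n)" for n by (simp add: s_def)
  from assms(4) have C1: "\<And>u v. (u, v) \<in> E \<Longrightarrow> (T u, T v) \<in> E"
    by (simp add: ciric_G_contraction_def)
  from assms(4) obtain a1 a2 a3 a4 :: "'a \<Rightarrow> 'a \<Rightarrow> real" where
    pos: "\<forall>x y. 0 < a1 x y \<and> 0 < a2 x y \<and> 0 < a3 x y \<and> 0 < a4 x y" and
    bdd: "bdd_above {a1 x y + a2 x y + a3 x y + 2 * a4 x y | x y. True}" and
    sup: "Sup {a1 x y + a2 x y + a3 x y + 2 * a4 x y | x y. True} < 1" and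
    C2: "\<forall>x y V1 V2 V3 V4 V5.
           basic_rep F V1 \<longrightarrow> basic_rep F V2 \<longrightarrow> basic_rep F V3 \<longrightarrow>
           basic_rep F V4 \<longrightarrow> basic_rep F V5 \<longrightarrow>
           (x, y) \<in> E \<longrightarrow> (x, y) \<in> ent V1 \<longrightarrow> (x, T x) \<in> ent V2 \<longrightarrow>
           (y, T y) \<in> ent V3 \<longrightarrow> (x, T y) \<in> ent V4 \<longrightarrow> (y, T x) \<in> ent V5 \<longrightarrow>
           (T x, T y) \<in> scaled_ent (a1 x y) V1 \<circ>\<^sub>u scaled_ent (a2 x y) V2 \<circ>\<^sub>u
                        scaled_ent (a3 x y) V3 \<circ>\<^sub>u scaled_ent (a4 x y) V4 \<circ>\<^sub>u
                        scaled_ent (a4 x y) V5"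
    unfolding ciric_G_contraction_def by blast
  define \<alpha> where "\<alpha> = Sup {a1 x y + a2 x y + a3 x y + 2 * a4 x y | x y. True}"
  have le\<alpha>: "a1 u v + a2 u v + a3 u v + 2 * a4 u v \<le> \<alpha>" for u v
    unfolding \<alpha>_def by (rule cSup_upper[OF _ bdd]) blast
  have \<alpha>1: "\<alpha> < 1" using sup by (simp add: \<alpha>_def)
  have \<alpha>0: "0 \<le> \<alpha>" using le\<alpha>[of x x] pos by (smt (verit))
  have sE: "(s n, s (Suc n)) \<in> E" for n
  proof (induction n)
    case 0 then show ?case using assms(5) by (simp add: s_def X_T_def)
  next
    case (Suc n) then show ?case using C1 by (simp add: sS)
  qed
  have bound: "\<exists>N. \<forall>m n. N \<le> m \<longrightarrow> N \<le> n \<longrightarrow> \<rho> (s m) (s n) < r"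
    if rF: "\<rho> \<in> F" and r: "0 < r" for \<rho> r
  proof -
    have pm: "pseudometric \<rho>" using assms(2) rF by blast
    have nn: "\<And>u v. 0 \<le> \<rho> u v" and z: "\<And>u. \<rho> u u = 0"
      and sym: "\<And>u v. \<rho> u v = \<rho> v u"
      and tri: "\<And>u v w. \<rho> u v \<le> \<rho> u w + \<rho> w v" using pm unfolding pseudometric_def by blast+
    define d where "d n = \<rho> (s n) (s (Suc n))" for n
    have step: "d (Suc n) \<le> \<alpha> * d n" for n
    proof -
      let ?u = "s n" and ?v = "s (Suc n)"
      have k: "\<rho> (T ?u) (T ?v) \<le> a1 ?u ?v * \<rho> ?u ?v + a2 ?u ?v * \<rho> ?u (T ?u)
           + a3 ?u ?v * \<rho> ?v (T ?v) + a4 ?u ?v * (\<rho> ?u (T ?v) + \<rho> ?v (T ?u))"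
        apply (rule key_ineq[OF pm rF])
        using pos C2 sE[of n] by auto
      show ?thesis
        apply (rule ratio_step[of "a1 ?u ?v" "a2 ?u ?v" "a3 ?u ?v"
              "a4 ?u ?v" \<alpha> "d n" "d (Suc n)" "\<rho> (s n) (s (Suc (Suc n)))"])
        using pos le\<alpha>[of ?u ?v] \<alpha>1 nn k tri[of "s n" "s (Suc (Suc n))" "s (Suc n)"]
        by (simp_all add: d_def sS z)
    qed
    have dn: "d n \<le> \<alpha> ^ n * d 0" for n
    proof (induction n)
      case (Suc n)
      have "d (Suc n) \<le> \<alpha> * d n" by (rule step)
      also have "\<dots> \<le> \<alpha> * (\<alpha> ^ n * d 0)" using Suc \<alpha>0 by (rule mult_left_mono)
      finally show ?case by simp
    qed simp
    have d0: "0 \<le> d 0" by (simp add: d_def nn)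
    have far: "\<rho> (s m) (s (m + k)) \<le> d 0 * (\<Sum>i<k. \<alpha> ^ (m + i))" for m k
    proof (induction k)
      case 0 show ?case by (simp add: z)
    next
      case (Suc k)
      have "\<rho> (s m) (s (m + Suc k)) \<le> \<rho> (s m) (s (m + k)) + d (m + k)"
        using tri[of "s m" "s (Suc (m + k))" "s (m + k)"] by (simp add: d_def)
      also have "\<dots> \<le> d 0 * (\<Sum>i<k. \<alpha> ^ (m + i)) + \<alpha> ^ (m + k) * d 0"
        using Suc dn[of "m + k"] by linarith
      finally show ?case by (simp add: algebra_simps)
    qed
    have geo: "(\<Sum>i<k. \<alpha> ^ (m + i)) \<le> \<alpha> ^ m / (1 - \<alpha>)" for m k
    proof -
      have "(\<Sum>i<k. \<alpha> ^ (m + i)) = \<alpha> ^ m * (\<Sum>i<k. \<alpha> ^ i)"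
        by (simp add: power_add sum_distrib_left)
      also have "(\<Sum>i<k. \<alpha> ^ i) = (1 - \<alpha> ^ k) / (1 - \<alpha>)"
        using \<alpha>1 by (simp add: sum_gp_strict)
      also have "\<alpha> ^ m * ((1 - \<alpha> ^ k) / (1 - \<alpha>)) \<le> \<alpha> ^ m * (1 / (1 - \<alpha>))"
        using \<alpha>0 \<alpha>1 by (intro mult_left_mono divide_right_mono) auto
      finally show ?thesis by simp
    qed
    have farb: "\<rho> (s m) (s n) \<le> d 0 * (\<alpha> ^ N / (1 - \<alpha>))" if "N \<le> m" "m \<le> n" for N m n
    proof -
      obtain k where n: "n = m + k" using \<open>m \<le> n\<close> le_Suc_ex by blast
      have "\<alpha> ^ m \<le> \<alpha> ^ N" using \<alpha>0 \<alpha>1 that by (simp add: power_decreasing)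
      hence "\<alpha> ^ m / (1 - \<alpha>) \<le> \<alpha> ^ N / (1 - \<alpha>)" using \<alpha>1 by (simp add: divide_right_mono)
      hence "(\<Sum>i<k. \<alpha> ^ (m + i)) \<le> \<alpha> ^ N / (1 - \<alpha>)" using geo[of m k] by linarith
      hence "d 0 * (\<Sum>i<k. \<alpha> ^ (m + i)) \<le> d 0 * (\<alpha> ^ N / (1 - \<alpha>))" using d0 by (rule mult_left_mono)
      thus ?thesis using far[of m k] unfolding n by linarith
    qed
    have "(\<lambda>N. d 0 * (\<alpha> ^ N / (1 - \<alpha>))) \<longlonglongrightarrow> d 0 * (0 / (1 - \<alpha>))"
      by (intro tendsto_intros LIMSEQ_power_zero) (use \<alpha>0 \<alpha>1 in auto)
    hence "(\<lambda>N. d 0 * (\<alpha> ^ N / (1 - \<alpha>))) \<longlonglongrightarrow> 0" by simp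
    then obtain N where N: "d 0 * (\<alpha> ^ N / (1 - \<alpha>)) < r"
      using order_tendstoD(2)[OF _ r, of _ sequentially] unfolding eventually_sequentially by (meson order_refl)
    show ?thesis
    proof (intro exI allI impI)
      fix m n assume "N \<le> m" "N \<le> n"
      show "\<rho> (s m) (s n) < r"
      proof (cases "m \<le> n")
        case True thus ?thesis using farb[OF \<open>N \<le> m\<close> True] N by linarith
      next
        case False thus ?thesis using farb[OF \<open>N \<le> n\<close>, of m] N sym by fastforce
      qed
    qed
  qed
  show ?thesis
    unfolding unif_cauchy_def s_def[symmetric]
  proof
    fix U assume "U \<in> unif F"
    then obtain rs where rs: "basic_rep F rs" and sub: "ent rs \<subseteq> U"
      by (auto simp: unif_def basic_ents_def)
    have "\<forall>p \<in> set rs. eventually (\<lambda>N. \<forall>m n. N \<le> m \<longrightarrow> N \<le> n \<longrightarrow> fst p (s m) (s n) < snd p) sequentially"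
    proof
      fix p assume "p \<in> set rs"
      hence "fst p \<in> F" "0 < snd p" using rs by (auto simp: basic_rep_def)
      then obtain N where "\<forall>m n. N \<le> m \<longrightarrow> N \<le> n \<longrightarrow> fst p (s m) (s n) < snd p"
        using bound by blast
      thus "eventually (\<lambda>N. \<forall>m n. N \<le> m \<longrightarrow> N \<le> n \<longrightarrow> fst p (s m) (s n) < snd p) sequentially"
        unfolding eventually_sequentially by (meson order_trans)
    qed
    hence "eventually (\<lambda>N. \<forall>p \<in> set rs. \<forall>m n. N \<le> m \<longrightarrow> N \<le> n \<longrightarrow> fst p (s m) (s n) < snd p) sequentially"
      by (simp add: eventually_ball_finite)
    then obtain N where N: "\<forall>p \<in> set rs. \<forall>m n. N \<le> m \<longrightarrow> N \<le> n \<longrightarrow> fst p (s m) (s n) < snd p"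
      unfolding eventually_sequentially by blast
    show "\<exists>N. \<forall>m n. N \<le> m \<longrightarrow> N \<le> n \<longrightarrow> (s m, s n) \<in> U"
    proof (intro exI allI impI)
      fix m n assume "N \<le> m" "N \<le> n"
      hence "(s m, s n) \<in> ent rs" using N by (auto simp: ent_def scaled_ent_def)
      thus "(s m, s n) \<in> U" using sub by blast
    qed
  qed
qed

end
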